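(* Let $k\in\mathbb N^+$, $n\ge 2$, $\mathbf C=(c_0,\dots,c_k)\in\{0,1\}^{k+1}$ with $\mathbf C\neq(0,\dots,0)$. Define the polynomials $$x_{\mathbf C}^{n\uparrow}=x\prod_{j=2}^{n}\big((j-1)^kF_j(\mathbf C)x+(j-1)^kF_j(\mathbf C')\big),\qquad x_{\mathbf C}^{n\downarrow}=x\prod_{j=2}^{n}\big((j-1)^kF_j(\mathbf C)x-(j-1)^kF_j(\mathbf C')\big),$$ and $O^u_{\mathbf C}(n,m)=O_{\mathbf C}(n,m+c_k-1)$, $O^s_{\mathbf C}(n,m)=(-1)^{n+m}O_{\mathbf C}(n,m+c_k-1)$. Then $$x_{\mathbf C}^{n\uparrow}=\sum_{m=0}^nO^u_{\mathbf C}(n,m)x^m,\qquad x_{\mathbf C}^{n\downarrow}=\sum_{m=0}^nO^s_{\mathbf C}(n,m)x^m;$$ the zeros of $x_{\mathbf C}^{n\uparrow}$ are $x=0$ and $x=-F_j(\mathbf C')/F_j(\mathbf C)$ for $j=2,\dots,n$, and the zeros of $x_{\mathbf C}^{n\downarrow}$ are $x=0$ and $x=F_j(\mathbf C')/F_j(\mathbf C)$ for $j=2,\dots,n$.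
   Context: Put $\mathbf C'=(1,\dots,1)-\mathbf C$. Consider $k$-tuples $(\pi_1,\dots,\pi_k)$ of permutations of $\{1,\dots,n\}$. A position $\alpha$ is a record of a permutation $\pi$ if $\pi(\alpha)<\pi(\alpha')$ for every $\alpha'<\alpha$ (position $1$ is always a record). For a tuple, let $l_\alpha$ be the number of $\beta\in\{1,\dots,k\}$ for which $\alpha$ is a record of $\pi_\beta$. The $\mathbf C$ sequential optimization set is $S=\{\alpha:c_{l_\alpha}=1\}$, with weight $|S|$; for an integer $m$, $O_{\mathbf C}(n,m)$ is the number of $k$-tuples whose weight equals $m$. For $j\ge2$ and $X=(x_0,\dots,x_k)\in\mathbb R^{k+1}$, $F_j(X)=\sum_{\beta=0}^k\binom{k}{\beta}\frac{x_\beta}{(j-1)^\beta}$. *)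

theory Defs
  imports Complex_Main "HOL-Combinatorics.Permutations" "HOL-Computational_Algebra.Polynomial"
begin

definition is_record :: "(nat \<Rightarrow> nat) \<Rightarrow> nat \<Rightarrow> bool" where
  "is_record p a \<longleftrightarrow> (\<forall>a'\<in>{1..<a}. p a < p a')"

definition perm_tuples :: "nat \<Rightarrow> nat \<Rightarrow> (nat \<Rightarrow> nat \<Rightarrow> nat) set" where
  "perm_tuples n k = Pi\<^sub>E {1..k} (\<lambda>_. {p. p permutes {1..n}})"

definition rec_count :: "nat \<Rightarrow> (nat \<Rightarrow> nat \<Rightarrow> nat) \<Rightarrow> nat \<Rightarrow> nat" where
  "rec_count k pis a = card {b\<in>{1..k}. is_record (pis b) a}"

text \<open>C sequential optimization set; C is given as c : nat => nat, c i for i = 0..k.\<close>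
definition seq_opt_set :: "nat \<Rightarrow> nat \<Rightarrow> (nat \<Rightarrow> nat) \<Rightarrow> (nat \<Rightarrow> nat \<Rightarrow> nat) \<Rightarrow> nat set" where
  "seq_opt_set n k c pis = {a\<in>{1..n}. c (rec_count k pis a) = 1}"

definition O_C :: "nat \<Rightarrow> nat \<Rightarrow> (nat \<Rightarrow> nat) \<Rightarrow> int \<Rightarrow> nat" where
  "O_C n k c m = card {pis\<in>perm_tuples n k. int (card (seq_opt_set n k c pis)) = m}"

definition compl_C :: "(nat \<Rightarrow> nat) \<Rightarrow> nat \<Rightarrow> nat" where
  "compl_C c i = 1 - c i"

definition F :: "nat \<Rightarrow> nat \<Rightarrow> (nat \<Rightarrow> real) \<Rightarrow> real" where
  "F k j X = (\<Sum>b=0..k. real (k choose b) * X b / (real j - 1) ^ b)"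

definition x_up :: "nat \<Rightarrow> nat \<Rightarrow> (nat \<Rightarrow> nat) \<Rightarrow> real poly" where
  "x_up n k c = [:0, 1:] * (\<Prod>j\<in>{2..n}.
     [: (real j - 1) ^ k * F k j (\<lambda>i. real (compl_C c i)),
        (real j - 1) ^ k * F k j (\<lambda>i. real (c i)) :])"

definition x_down :: "nat \<Rightarrow> nat \<Rightarrow> (nat \<Rightarrow> nat) \<Rightarrow> real poly" where
  "x_down n k c = [:0, 1:] * (\<Prod>j\<in>{2..n}.
     [: - ((real j - 1) ^ k * F k j (\<lambda>i. real (compl_C c i))),
        (real j - 1) ^ k * F k j (\<lambda>i. real (c i)) :])"

definition O_u :: "nat \<Rightarrow> nat \<Rightarrow> (nat \<Rightarrow> nat) \<Rightarrow> nat \<Rightarrow> int" where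
  "O_u n k c m = int (O_C n k c (int m + int (c k) - 1))"

definition O_s :: "nat \<Rightarrow> nat \<Rightarrow> (nat \<Rightarrow> nat) \<Rightarrow> nat \<Rightarrow> int" where
  "O_s n k c m = (-1) ^ (n + m) * int (O_C n k c (int m + int (c k) - 1))"

end

theory Submission
  imports Defs
begin

definition shiftv :: "nat \<Rightarrow> nat \<Rightarrow> nat" where
  "shiftv v y = (if v \<le> y then y + 1 else y)"

definition ins :: "nat \<Rightarrow> (nat \<Rightarrow> nat) \<Rightarrow> nat \<Rightarrow> nat \<Rightarrow> nat" where
  "ins n q v a = (if a \<in> {1..n} then shiftv v (q a) else if a = Suc n then v else a)"

lemma shiftv_less: "shiftv v x < shiftv v y \<longleftrightarrow> x < y"
  by (auto simp: shiftv_def)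

lemma shiftv_inj: "shiftv v x = shiftv v y \<longleftrightarrow> x = y"
  by (auto simp: shiftv_def)

lemma shiftv_ne: "shiftv v x \<noteq> v"
  by (auto simp: shiftv_def)

lemma ins_permutes:
  assumes q: "q permutes {1..n}" and v: "v \<in> {1..Suc n}"
  shows "ins n q v permutes {1..Suc n}"
proof (rule bij_imp_permutes)
  have img: "ins n q v ` {1..Suc n} \<subseteq> {1..Suc n}"
  proof
    fix y assume "y \<in> ins n q v ` {1..Suc n}"
    then obtain a where a: "a \<in> {1..Suc n}" "y = ins n q v a" by auto
    show "y \<in> {1..Suc n}"
    proof (cases "a \<in> {1..n}")
      case True
      then have "q a \<in> {1..n}" using permutes_in_image[OF q] by simp
      then show ?thesis using a True by (auto simp: ins_def shiftv_def)
    next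
      case False
      then show ?thesis using a v by (auto simp: ins_def)
    qed
  qed
  have inj: "inj_on (ins n q v) {1..Suc n}"
  proof (rule inj_onI)
    fix a b assume a: "a \<in> {1..Suc n}" and b: "b \<in> {1..Suc n}" and e: "ins n q v a = ins n q v b"
    have iq: "inj q" using permutes_inj[OF q] .
    show "a = b"
    proof (cases "a \<in> {1..n}"; cases "b \<in> {1..n}")
      assume "a \<in> {1..n}" "b \<in> {1..n}"
      then show ?thesis using e iq by (auto simp: ins_def shiftv_inj dest: injD)
    next
      assume "a \<in> {1..n}" "b \<notin> {1..n}"
      then show ?thesis using e b shiftv_ne by (auto simp: ins_def)
    next
      assume "a \<notin> {1..n}" "b \<in> {1..n}"
      then show ?thesis using e a shiftv_ne by (auto simp: ins_def) (metis shiftv_ne)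
    next
      assume "a \<notin> {1..n}" "b \<notin> {1..n}"
      then show ?thesis using a b by auto
    qed
  qed
  show "bij_betw (ins n q v) {1..Suc n} {1..Suc n}"
    using inj img by (simp add: bij_betw_def endo_inj_surj)
  show "\<And>x. x \<notin> {1..Suc n} \<Longrightarrow> ins n q v x = x"
    by (auto simp: ins_def)
qed

lemma ins_inj_aux:
  assumes q: "q permutes {1..n}" and q': "q' permutes {1..n}"
    and e: "ins n q v = ins n q' v'"
  shows "q = q' \<and> v = v'"
proof -
  have "v = v'" using fun_cong[OF e, of "Suc n"] by (simp add: ins_def)
  moreover have "q = q'"
  proof
    fix a show "q a = q' a"
    proof (cases "a \<in> {1..n}")
      case True
      then show ?thesis using fun_cong[OF e, of a] \<open>v = v'\<close> by (simp add: ins_def shiftv_inj)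
    next
      case False
      then show ?thesis using permutes_not_in[OF q, of a] permutes_not_in[OF q', of a] by simp
    qed
  qed
  ultimately show "q = q' \<and> v = v'" by simp
qed

lemma ins_inj:
  "inj_on (\<lambda>(q, v). ins n q v) ({q. q permutes {1..n}} \<times> {1..Suc n})"
proof (rule inj_onI)
  fix x y :: "(nat \<Rightarrow> nat) \<times> nat"
  assume "x \<in> {q. q permutes {1..n}} \<times> {1..Suc n}" "y \<in> {q. q permutes {1..n}} \<times> {1..Suc n}"
    "(\<lambda>(q, v). ins n q v) x = (\<lambda>(q, v). ins n q v) y"
  show "x = y" if that: "x \<in> {q. q permutes {1..n}} \<times> {1..Suc n}" "y \<in> {q. q permutes {1..n}} \<times> {1..Suc n}"
    "(\<lambda>(q, v). ins n q v) x = (\<lambda>(q, v). ins n q v) y"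
  proof -
    obtain q v q' v' where xy: "x = (q, v)" "y = (q', v')" by (cases x; cases y) auto
    show "x = y" using that xy ins_inj_aux[of q n q' v v'] by simp
  qed
qed

lemma ins_image:
  "(\<lambda>(q, v). ins n q v) ` ({q. q permutes {1..n}} \<times> {1..Suc n}) = {p. p permutes {1..Suc n}}"
proof (rule card_subset_eq)
  show "finite {p. p permutes {1..Suc n}}" by (simp add: finite_permutations)
  show "(\<lambda>(q, v). ins n q v) ` ({q. q permutes {1..n}} \<times> {1..Suc n}) \<subseteq> {p. p permutes {1..Suc n}}"
    using ins_permutes by auto
  have "card ((\<lambda>(q, v). ins n q v) ` ({q. q permutes {1..n}} \<times> {1..Suc n})) = fact n * Suc n"
    by (subst card_image[OF ins_inj]) (simp add: card_cartesian_product card_permutations)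
  also have "\<dots> = card {p. p permutes {1..Suc n}}"
    by (simp add: card_permutations)
  finally show "card ((\<lambda>(q, v). ins n q v) ` ({q. q permutes {1..n}} \<times> {1..Suc n})) = card {p. p permutes {1..Suc n}}" .
qed

lemma ins_record_low:
  assumes a: "a \<in> {1..n}"
  shows "is_record (ins n q v) a \<longleftrightarrow> is_record q a"
proof -
  have ia: "ins n q v a = shiftv v (q a)" using a by (simp add: ins_def)
  have "\<forall>a'\<in>{1..<a}. (ins n q v a < ins n q v a') = (q a < q a')"
  proof
    fix a' assume "a' \<in> {1..<a}"
    then have "a' \<in> {1..n}" using a by auto
    then have "ins n q v a' = shiftv v (q a')" by (simp add: ins_def)
    then show "(ins n q v a < ins n q v a') = (q a < q a')" using ia shiftv_less by simp
  qed
  then show ?thesis unfolding is_record_def by blast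
qed

lemma ins_record_last:
  assumes q: "q permutes {1..n}" and v: "v \<in> {1..Suc n}"
  shows "is_record (ins n q v) (Suc n) \<longleftrightarrow> v = 1"
proof
  assume r: "is_record (ins n q v) (Suc n)"
  show "v = 1"
  proof (rule ccontr)
    assume v1: "v \<noteq> 1"
    then have n: "n \<ge> 1" using v by auto
    then have "1 \<in> q ` {1..n}" using permutes_image[OF q] by simp
    then obtain a where a0: "a \<in> {1..n}" "1 = q a" by (rule imageE)
    then have a: "a \<in> {1..n}" "q a = 1" by simp_all
    have "ins n q v a = shiftv v 1" using a by (simp add: ins_def)
    also have "\<dots> = 1" using v1 v by (simp add: shiftv_def)
    finally have ia: "ins n q v a = 1" .
    have last: "ins n q v (Suc n) = v" by (simp add: ins_def)
    have "a \<in> {1..<Suc n}" using a by simp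
    then have "ins n q v (Suc n) < ins n q v a" using r unfolding is_record_def by blast
    then show False using ia last v by simp
  qed
next
  assume v1: "v = 1"
  show "is_record (ins n q v) (Suc n)"
    unfolding is_record_def
  proof
    fix a' assume "a' \<in> {1..<Suc n}"
    then have a': "a' \<in> {1..n}" by simp
    then have "q a' \<in> {1..n}" using permutes_in_image[OF q] by simp
    then show "ins n q v (Suc n) < ins n q v a'" using a' v1 by (simp add: ins_def shiftv_def)
  qed
qed

lemma card_Q:
  assumes I: "finite I" and T: "T \<subseteq> I"
  shows "card (PiE I (\<lambda>b. if b \<in> T then {1} else {2..Suc n})) = n ^ (card I - card T)"
proof -
  have "card (PiE I (\<lambda>b. if b \<in> T then {1} else {2..Suc n})) =
        (\<Prod>b\<in>I. if b \<in> T then 1 else n)"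
    using I by (subst card_PiE[OF I]) (rule prod.cong, auto)
  also have "\<dots> = (\<Prod>b\<in>I \<inter> {b. b \<in> T}. 1) * (\<Prod>b\<in>I \<inter> - {b. b \<in> T}. n)"
    using I by (rule prod.If_cases)
  also have "\<dots> = n ^ card (I - T)"
    by (simp add: Diff_eq)
  also have "card (I - T) = card I - card T"
    using I T by (simp add: card_Diff_subset finite_subset)
  finally show ?thesis .
qed

lemma card_level:
  assumes I: "finite I"
  shows "card {vs \<in> PiE I (\<lambda>_. {1..Suc n}). card {b\<in>I. vs b = 1} = l} = (card I choose l) * n ^ (card I - l)"
proof -
  define Q where "Q T = PiE I (\<lambda>b. if b \<in> T then {1} else {2..Suc n})" for T :: "'a set"
  define TT where "TT = {T. T \<subseteq> I \<and> card T = l}"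
  have eq: "{vs \<in> PiE I (\<lambda>_. {1..Suc n}). card {b\<in>I. vs b = 1} = l} = (\<Union>T\<in>TT. Q T)"
  proof (intro equalityI subsetI)
    fix vs assume vs: "vs \<in> {vs \<in> PiE I (\<lambda>_. {1..Suc n}). card {b\<in>I. vs b = 1} = l}"
    have "{b\<in>I. vs b = 1} \<in> TT" using vs by (auto simp: TT_def)
    moreover have "vs \<in> Q {b\<in>I. vs b = 1}"
      using vs by (auto simp: Q_def PiE_iff)
    ultimately show "vs \<in> (\<Union>T\<in>TT. Q T)" by blast
  next
    fix vs assume "vs \<in> (\<Union>T\<in>TT. Q T)"
    then obtain T where T: "T \<in> TT" "vs \<in> Q T" by blast
    have "{b\<in>I. vs b = 1} = T"
      using T by (auto simp: Q_def TT_def PiE_iff split: if_splits)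
    then show "vs \<in> {vs \<in> PiE I (\<lambda>_. {1..Suc n}). card {b\<in>I. vs b = 1} = l}"
      using T by (auto simp: Q_def TT_def PiE_iff split: if_splits)
  qed
  have finTT: "finite TT" using I by (auto simp: TT_def)
  have "card (\<Union>T\<in>TT. Q T) = (\<Sum>T\<in>TT. card (Q T))"
  proof (rule card_UN_disjoint[OF finTT])
    show "\<forall>T\<in>TT. finite (Q T)" using I by (auto simp: Q_def intro!: finite_PiE)
    show "\<forall>T\<in>TT. \<forall>T'\<in>TT. T \<noteq> T' \<longrightarrow> Q T \<inter> Q T' = {}"
    proof (intro ballI impI)
      fix T T' assume TT: "T \<in> TT" "T' \<in> TT" "T \<noteq> T'"
      show "Q T \<inter> Q T' = {}"
      proof (rule ccontr)
        assume "Q T \<inter> Q T' \<noteq> {}"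
        then obtain vs where "vs \<in> Q T" "vs \<in> Q T'" by blast
        then have "{b\<in>I. vs b = 1} = T" "{b\<in>I. vs b = 1} = T'"
          using TT by (auto simp: Q_def TT_def PiE_iff split: if_splits)
        then show False using TT by simp
      qed
    qed
  qed
  also have "\<dots> = (\<Sum>T\<in>TT. n ^ (card I - l))"
    by (rule sum.cong) (auto simp: TT_def Q_def card_Q[OF I])
  also have "\<dots> = (card I choose l) * n ^ (card I - l)"
    using n_subsets[OF I, of l] by (simp add: TT_def)
  finally show ?thesis using eq by simp
qed

lemma sum_count_ones:
  fixes f :: "nat \<Rightarrow> 'b::comm_semiring_1"
  assumes I: "finite I"
  shows "(\<Sum>vs\<in>PiE I (\<lambda>_. {1..Suc n}). f (card {b\<in>I. vs b = 1})) =
         (\<Sum>l=0..card I. of_nat ((card I choose l) * n ^ (card I - l)) * f l)"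
proof -
  let ?P = "PiE I (\<lambda>_. {1..Suc n})"
  let ?cnt = "\<lambda>vs. card {b\<in>I. vs b = 1}"
  have fP: "finite ?P" using I by (simp add: finite_PiE)
  have sub: "?cnt ` ?P \<subseteq> {0..card I}"
    using I by (auto intro!: card_mono)
  have "(\<Sum>vs\<in>?P. f (?cnt vs)) = (\<Sum>l=0..card I. \<Sum>vs\<in>{vs. vs \<in> ?P \<and> ?cnt vs = l}. f (?cnt vs))"
    using sum.group[OF fP _ sub, of "\<lambda>vs. f (?cnt vs)"] by simp
  also have "\<dots> = (\<Sum>l=0..card I. of_nat (card {vs \<in> ?P. ?cnt vs = l}) * f l)"
    by (rule sum.cong) auto
  also have "\<dots> = (\<Sum>l=0..card I. of_nat ((card I choose l) * n ^ (card I - l)) * f l)"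
    using card_level[OF I] by simp
  finally show ?thesis .
qed

definition Gp :: "nat \<Rightarrow> nat \<Rightarrow> (nat \<Rightarrow> nat) \<Rightarrow> real poly" where
  "Gp n k c = (\<Sum>pis\<in>perm_tuples n k. monom 1 (card (seq_opt_set n k c pis)))"

definition insT :: "nat \<Rightarrow> nat \<Rightarrow> (nat \<Rightarrow> nat \<Rightarrow> nat) \<Rightarrow> (nat \<Rightarrow> nat) \<Rightarrow> nat \<Rightarrow> nat \<Rightarrow> nat" where
  "insT n k qs vs = (\<lambda>b. if b \<in> {1..k} then ins n (qs b) (vs b) else undefined)"

definition Vs :: "nat \<Rightarrow> nat \<Rightarrow> (nat \<Rightarrow> nat) set" where
  "Vs n k = PiE {1..k} (\<lambda>_. {1..Suc n})"

lemma insT_in: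
  assumes "qs \<in> perm_tuples n k" "vs \<in> Vs n k"
  shows "insT n k qs vs \<in> perm_tuples (Suc n) k"
  using assms ins_permutes by (auto simp: perm_tuples_def Vs_def insT_def PiE_iff extensional_def)

lemma insT_inj: "inj_on (\<lambda>(qs, vs). insT n k qs vs) (perm_tuples n k \<times> Vs n k)"
proof (rule inj_onI)
  fix x y assume x: "x \<in> perm_tuples n k \<times> Vs n k" and y: "y \<in> perm_tuples n k \<times> Vs n k"
    and e: "(\<lambda>(qs, vs). insT n k qs vs) x = (\<lambda>(qs, vs). insT n k qs vs) y"
  obtain qs vs qs' vs' where xy: "x = (qs, vs)" "y = (qs', vs')" by (cases x; cases y) auto
  have e': "insT n k qs vs = insT n k qs' vs'" using e xy by simp
  have "\<forall>b\<in>{1..k}. qs b = qs' b \<and> vs b = vs' b"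
  proof
    fix b assume b: "b \<in> {1..k}"
    have "ins n (qs b) (vs b) = ins n (qs' b) (vs' b)"
      using fun_cong[OF e', of b] b by (simp add: insT_def)
    moreover have "qs b permutes {1..n}" "qs' b permutes {1..n}"
      using x y xy b by (auto simp: perm_tuples_def PiE_iff)
    ultimately show "qs b = qs' b \<and> vs b = vs' b" using ins_inj_aux by blast
  qed
  moreover have "qs \<in> extensional {1..k}" "qs' \<in> extensional {1..k}"
    "vs \<in> extensional {1..k}" "vs' \<in> extensional {1..k}"
    using x y xy by (auto simp: perm_tuples_def Vs_def PiE_iff)
  ultimately have "qs = qs'" "vs = vs'"
    by (auto simp: extensional_def fun_eq_iff)
  then show "x = y" using xy by simp
qed

lemma card_perm_tuples: "card (perm_tuples n k) = fact n ^ k"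
  by (simp add: perm_tuples_def card_PiE card_permutations)

lemma card_Vs: "card (Vs n k) = Suc n ^ k"
  by (simp add: Vs_def card_PiE)

lemma insT_image: "(\<lambda>(qs, vs). insT n k qs vs) ` (perm_tuples n k \<times> Vs n k) = perm_tuples (Suc n) k"
proof (rule card_subset_eq)
  show "finite (perm_tuples (Suc n) k)"
    by (simp add: perm_tuples_def finite_PiE finite_permutations)
  show "(\<lambda>(qs, vs). insT n k qs vs) ` (perm_tuples n k \<times> Vs n k) \<subseteq> perm_tuples (Suc n) k"
    using insT_in by auto
  have "card ((\<lambda>(qs, vs). insT n k qs vs) ` (perm_tuples n k \<times> Vs n k)) = fact n ^ k * Suc n ^ k"
    by (subst card_image[OF insT_inj]) (simp add: card_cartesian_product card_perm_tuples card_Vs)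
  also have "\<dots> = (fact n * Suc n) ^ k" by (rule power_mult_distrib[symmetric])
  also have "\<dots> = card (perm_tuples (Suc n) k)"
    by (simp add: card_perm_tuples mult.commute)
  finally show "card ((\<lambda>(qs, vs). insT n k qs vs) ` (perm_tuples n k \<times> Vs n k)) = card (perm_tuples (Suc n) k)" .
qed

lemma seq_opt_insT:
  assumes qs: "qs \<in> perm_tuples n k" and vs: "vs \<in> Vs n k"
  shows "seq_opt_set (Suc n) k c (insT n k qs vs) =
    seq_opt_set n k c qs \<union> (if c (card {b\<in>{1..k}. vs b = 1}) = 1 then {Suc n} else {})"
proof -
  have low: "rec_count k (insT n k qs vs) a = rec_count k qs a" if a: "a \<in> {1..n}" for a
  proof -
    have "{b\<in>{1..k}. is_record (insT n k qs vs b) a} = {b\<in>{1..k}. is_record (qs b) a}"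
      using ins_record_low[OF a] by (auto simp: insT_def)
    then show ?thesis by (simp add: rec_count_def)
  qed
  have last: "rec_count k (insT n k qs vs) (Suc n) = card {b\<in>{1..k}. vs b = 1}"
  proof -
    have "{b\<in>{1..k}. is_record (insT n k qs vs b) (Suc n)} = {b\<in>{1..k}. vs b = 1}"
    proof (rule Collect_cong)
      fix b
      show "(b \<in> {1..k} \<and> is_record (insT n k qs vs b) (Suc n)) = (b \<in> {1..k} \<and> vs b = 1)"
      proof (cases "b \<in> {1..k}")
        case True
        then have "qs b permutes {1..n}" "vs b \<in> {1..Suc n}"
          using qs vs by (auto simp: perm_tuples_def Vs_def PiE_iff)
        then show ?thesis using True ins_record_last by (simp add: insT_def)
      qed auto
    qed
    then show ?thesis by (simp add: rec_count_def)
  qed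
  have "{1..Suc n} = {1..n} \<union> {Suc n}" by auto
  then show ?thesis
    unfolding seq_opt_set_def using low last by auto
qed

lemma card_seq_opt_insT:
  assumes qs: "qs \<in> perm_tuples n k" and vs: "vs \<in> Vs n k"
  shows "card (seq_opt_set (Suc n) k c (insT n k qs vs)) =
    card (seq_opt_set n k c qs) + (if c (card {b\<in>{1..k}. vs b = 1}) = 1 then 1 else 0)"
proof -
  have "seq_opt_set n k c qs \<subseteq> {1..n}" by (auto simp: seq_opt_set_def)
  then have "Suc n \<notin> seq_opt_set n k c qs" by auto
  moreover have "finite (seq_opt_set n k c qs)" by (simp add: seq_opt_set_def)
  ultimately show ?thesis using seq_opt_insT[OF qs vs] by auto
qed

lemma Gp_Suc:
  "Gp (Suc n) k c = Gp n k c * (\<Sum>vs\<in>Vs n k. monom 1 (if c (card {b\<in>{1..k}. vs b = 1}) = 1 then 1 else 0))"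
proof -
  have "Gp (Suc n) k c = (\<Sum>x\<in>perm_tuples n k \<times> Vs n k.
      monom 1 (card (seq_opt_set (Suc n) k c ((\<lambda>(qs, vs). insT n k qs vs) x))))"
    unfolding Gp_def by (subst insT_image[symmetric], subst sum.reindex[OF insT_inj]) (simp add: comp_def case_prod_unfold)
  also have "\<dots> = (\<Sum>qs\<in>perm_tuples n k. \<Sum>vs\<in>Vs n k.
      monom 1 (card (seq_opt_set (Suc n) k c (insT n k qs vs))))"
    by (subst sum.cartesian_product) (simp add: case_prod_unfold)
  also have "\<dots> = (\<Sum>qs\<in>perm_tuples n k. \<Sum>vs\<in>Vs n k.
      monom 1 (card (seq_opt_set n k c qs)) * monom 1 (if c (card {b\<in>{1..k}. vs b = 1}) = 1 then 1 else 0))"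
    by (intro sum.cong refl) (simp add: card_seq_opt_insT mult_monom)
  also have "\<dots> = Gp n k c * (\<Sum>vs\<in>Vs n k. monom 1 (if c (card {b\<in>{1..k}. vs b = 1}) = 1 then 1 else 0))"
    by (simp only: Gp_def sum_product)
  finally show ?thesis .
qed

definition Ac :: "nat \<Rightarrow> (nat \<Rightarrow> nat) \<Rightarrow> nat \<Rightarrow> real" where
  "Ac k c j = (\<Sum>l=0..k. real (k choose l) * real j ^ (k - l) * real (c l))"
definition Bc :: "nat \<Rightarrow> (nat \<Rightarrow> nat) \<Rightarrow> nat \<Rightarrow> real" where
  "Bc k c j = (\<Sum>l=0..k. real (k choose l) * real j ^ (k - l) * real (compl_C c l))"

lemma of_nat_mult_poly: "(of_nat m :: real poly) * p = smult (of_nat m) p"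
  by (simp add: of_nat_poly)

lemma sum_pair_poly: "(\<Sum>l\<in>A. [:a l, b l:]) = [:(\<Sum>l\<in>A. a l), (\<Sum>l\<in>A. b l):]"
  by (induct A rule: infinite_finite_induct) simp_all

lemma H_eq:
  assumes c01: "\<forall>i\<le>k. c i \<in> {0, 1}"
  shows "(\<Sum>vs\<in>Vs n k. monom (1::real) (if c (card {b\<in>{1..k}. vs b = 1}) = 1 then 1 else 0))
     = [:Bc k c n, Ac k c n:]"
proof -
  have "(\<Sum>vs\<in>Vs n k. monom (1::real) (if c (card {b\<in>{1..k}. vs b = 1}) = 1 then 1 else 0))
     = (\<Sum>l=0..card {1..k}. of_nat ((card {1..k} choose l) * n ^ (card {1..k} - l)) *
          monom (1::real) (if c l = 1 then 1 else 0))"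
    unfolding Vs_def by (rule sum_count_ones) simp
  also have "\<dots> = (\<Sum>l=0..k. [:real (k choose l) * real n ^ (k - l) * real (compl_C c l),
                              real (k choose l) * real n ^ (k - l) * real (c l):])"
  proof (rule sum.cong)
    fix l assume l: "l \<in> {0..k}"
    then have "c l \<in> {0, 1}" using c01 by simp
    then show "of_nat ((card {1..k} choose l) * n ^ (card {1..k} - l)) *
          monom (1::real) (if c l = 1 then 1 else 0) =
        [:real (k choose l) * real n ^ (k - l) * real (compl_C c l),
          real (k choose l) * real n ^ (k - l) * real (c l):]"
      by (subst of_nat_mult_poly) (auto simp: compl_C_def monom_Suc)
  qed simp
  also have "\<dots> = [:Bc k c n, Ac k c n:]"
    by (simp add: sum_pair_poly Ac_def Bc_def)
  finally show ?thesis .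
qed

lemma Gp_0: "Gp 0 k c = 1"
proof -
  have "Gp 0 k c = (\<Sum>pis\<in>perm_tuples 0 k. 1)"
    unfolding Gp_def by (rule sum.cong) (auto simp: seq_opt_set_def)
  also have "\<dots> = 1" by (simp add: card_perm_tuples)
  finally show ?thesis .
qed

lemma Gp_prod:
  assumes c01: "\<forall>i\<le>k. c i \<in> {0, 1}"
  shows "Gp n k c = (\<Prod>j<n. [:Bc k c j, Ac k c j:])"
proof (induct n)
  case 0 show ?case by (simp add: Gp_0)
next
  case (Suc n)
  have "Gp (Suc n) k c = Gp n k c * [:Bc k c n, Ac k c n:]"
    by (simp only: Gp_Suc H_eq[OF c01])
  then show ?case by (simp only: Suc prod.lessThan_Suc)
qed

lemma coeff_Gp: "coeff (Gp n k c) m = real (O_C n k c (int m))"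
proof -
  have "coeff (Gp n k c) m = (\<Sum>pis\<in>perm_tuples n k. if card (seq_opt_set n k c pis) = m then 1 else 0)"
    by (simp add: Gp_def coeff_sum coeff_monom)
  also have "\<dots> = real (card {pis\<in>perm_tuples n k. card (seq_opt_set n k c pis) = m})"
    by (simp add: sum.If_cases perm_tuples_def finite_PiE finite_permutations Int_def)
  also have "\<dots> = real (O_C n k c (int m))"
    by (simp add: O_C_def)
  finally show ?thesis .
qed

lemma sum_zero_pow:
  "(\<Sum>l=0..k. real (k choose l) * (0::real) ^ (k - l) * g l) = g k"
proof (cases k)
  case 0 then show ?thesis by simp
next
  case (Suc k')
  have "(\<Sum>l=0..k'. real (Suc k' choose l) * (0::real) ^ (Suc k' - l) * g l) = 0"
    by (rule sum.neutral) auto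
  then show ?thesis using Suc by (simp add: sum.atLeast0_atMost_Suc)
qed

lemma Ac0: "Ac k c 0 = real (c k)"
  using sum_zero_pow[of k "\<lambda>l. real (c l)"] by (simp add: Ac_def)
lemma Bc0: "Bc k c 0 = real (compl_C c k)"
  using sum_zero_pow[of k "\<lambda>l. real (compl_C c l)"] by (simp add: Bc_def)

lemma F_scaled:
  assumes j: "j \<ge> 2"
  shows "(real j - 1) ^ k * F k j X = (\<Sum>l=0..k. real (k choose l) * real (j - 1) ^ (k - l) * X l)"
proof -
  have d: "real j - 1 = real (j - 1)" using j by simp
  have nz: "real (j - 1) \<noteq> 0" using j by simp
  have "(real j - 1) ^ k * F k j X = (\<Sum>l=0..k. real (j - 1) ^ k * (real (k choose l) * X l / real (j - 1) ^ l))"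
    by (simp add: F_def d sum_distrib_left)
  also have "\<dots> = (\<Sum>l=0..k. real (k choose l) * real (j - 1) ^ (k - l) * X l)"
  proof (rule sum.cong)
    fix l assume "l \<in> {0..k}"
    then have "real (j - 1) ^ (k - l) = real (j - 1) ^ k / real (j - 1) ^ l"
      using nz by (simp add: power_diff)
    then show "real (j - 1) ^ k * (real (k choose l) * X l / real (j - 1) ^ l) =
          real (k choose l) * real (j - 1) ^ (k - l) * X l" by simp
  qed simp
  finally show ?thesis .
qed

lemma root_iff:
  fixes d a f x :: real
  assumes "d \<noteq> 0" "f \<noteq> 0"
  shows "(d * a + x * (d * f) = 0) \<longleftrightarrow> x = - a / f"
proof -
  have "(d * a + x * (d * f) = 0) \<longleftrightarrow> a + x * f = 0"
    using assms(1) by (metis (no_types, opaque_lifting) distrib_left mult.left_commute mult_eq_0_iff)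
  also have "\<dots> \<longleftrightarrow> x = - a / f"
    using assms(2) by (auto simp: field_simps)
  finally show ?thesis .
qed

lemma root_iff2:
  fixes d a f x :: real
  assumes "d \<noteq> 0" "f \<noteq> 0"
  shows "(- (d * a) + x * (d * f) = 0) \<longleftrightarrow> x = a / f"
  using root_iff[OF assms, of "-a" x] by simp

theorem lemma3p4:
  fixes n k :: nat and c :: "nat \<Rightarrow> nat"
  assumes "k \<ge> 1" and "n \<ge> 2"
    and "\<forall>i\<le>k. c i \<in> {0, 1}"
    and "\<exists>i\<le>k. c i \<noteq> 0"
  shows "(x_up n k c = (\<Sum>m=0..n. monom (real_of_int (O_u n k c m)) m)) \<and>
    (x_down n k c = (\<Sum>m=0..n. monom (real_of_int (O_s n k c m)) m)) \<and>
    ({x. poly (x_up n k c) x = 0} =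
           insert 0 ((\<lambda>j. - F k j (\<lambda>i. real (compl_C c i)) / F k j (\<lambda>i. real (c i))) ` {2..n})) \<and>
    ({x. poly (x_down n k c) x = 0} =
           insert 0 ((\<lambda>j. F k j (\<lambda>i. real (compl_C c i)) / F k j (\<lambda>i. real (c i))) ` {2..n}))"
proof -
  note c01 = assms(3)
  define X where "X j = [:Bc k c j, Ac k c j:]" for j
  define FC where "FC j = F k j (\<lambda>i. real (c i))" for j
  define FC' where "FC' j = F k j (\<lambda>i. real (compl_C c i))" for j
  define d where "d j = (real j - 1) ^ k" for j :: nat
  obtain n' where n': "n = Suc n'" using assms(2) by (cases n) auto
  have fac: "[: d j * FC' j, d j * FC j :] = X (j - 1)" if j: "j \<in> {2..n}" for j
    using F_scaled[of j k] j by (simp add: X_def Ac_def Bc_def d_def FC_def FC'_def)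
  define P where "P = (\<Prod>j\<in>{1..n'}. X j)"
  have xup: "x_up n k c = [:0, 1:] * P"
  proof -
    have "x_up n k c = [:0, 1:] * (\<Prod>j\<in>{2..n}. X (j - 1))"
      unfolding x_up_def using fac by (simp add: d_def FC_def FC'_def)
    also have "(\<Prod>j\<in>{2..n}. X (j - 1)) = (\<Prod>j\<in>{Suc 1..Suc n'}. X (j - 1))"
      by (simp only: n' numeral_2_eq_2 One_nat_def)
    also have "\<dots> = P"
      unfolding P_def by (subst prod.shift_bounds_cl_Suc_ivl) simp
    finally show ?thesis .
  qed
  have Gp: "Gp n k c = X 0 * P"
  proof -
    have "{..<n} = insert 0 {1..n'}" using n' by auto
    then show ?thesis using Gp_prod[OF c01, of n] by (simp add: X_def P_def)
  qed
  have ck: "c k \<in> {0, 1}" using c01 by simp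
  have coeff_up: "coeff (x_up n k c) i = real_of_int (O_u n k c i)" for i
  proof (cases "c k = 1")
    case True
    then have "X 0 = [:0, 1:]" by (simp add: X_def Ac0 Bc0 compl_C_def)
    then have "x_up n k c = Gp n k c" using xup Gp by simp
    then show ?thesis using True by (simp add: coeff_Gp O_u_def)
  next
    case False
    then have c0: "c k = 0" using ck by simp
    then have "X 0 = 1" by (simp add: X_def Ac0 Bc0 compl_C_def one_pCons)
    then have up: "x_up n k c = pCons 0 (Gp n k c)" using xup Gp by simp
    show ?thesis
    proof (cases i)
      case 0
      have "{pis \<in> perm_tuples n k. int (card (seq_opt_set n k c pis)) = -1} = {}" by auto
      then show ?thesis using 0 up c0 by (simp add: O_u_def O_C_def)
    next
      case (Suc j)
      then show ?thesis using up c0 by (simp add: coeff_Gp O_u_def)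
    qed
  qed
  have deg: "degree (x_up n k c) \<le> n"
  proof -
    have "degree P \<le> sum (degree \<circ> X) {1..n'}"
      unfolding P_def by (rule degree_prod_sum_le) simp
    also have "\<dots> \<le> sum (\<lambda>_. 1) {1..n'}"
      by (rule sum_mono) (simp add: X_def)
    finally have "degree P \<le> n'" by simp
    then show ?thesis using xup n' degree_mult_le[of "[:0, 1:]" P] by simp
  qed
  have eq1: "x_up n k c = (\<Sum>m=0..n. monom (real_of_int (O_u n k c m)) m)"
  proof (rule poly_eqI)
    fix i
    show "coeff (x_up n k c) i = coeff (\<Sum>m=0..n. monom (real_of_int (O_u n k c m)) m) i"
    proof (cases "i \<le> n")
      case True
      then show ?thesis by (simp add: coeff_sum coeff_monom coeff_up)
    next
      case False
      then have "coeff (x_up n k c) i = 0" using deg by (intro coeff_eq_0) simp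
      then show ?thesis using False by (simp add: coeff_sum coeff_monom)
    qed
  qed
  have poly_up: "poly (x_up n k c) y = y * (\<Prod>j\<in>{2..n}. d j * FC' j + y * (d j * FC j))" for y
    by (simp add: x_up_def poly_prod d_def FC_def FC'_def)
  have poly_down: "poly (x_down n k c) y = y * (\<Prod>j\<in>{2..n}. - (d j * FC' j) + y * (d j * FC j))" for y
    by (simp add: x_down_def poly_prod d_def FC_def FC'_def)
  have eq2: "x_down n k c = (\<Sum>m=0..n. monom (real_of_int (O_s n k c m)) m)"
  proof -
    have "poly (x_down n k c) y = poly (\<Sum>m=0..n. monom (real_of_int (O_s n k c m)) m) y" for y
    proof -
      define Q where "Q = (\<Prod>j\<in>{2..n}. - (d j * FC' j) + y * (d j * FC j))"
      have cd: "card {2..n} = n'" using n' by simp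
      have "poly (x_up n k c) (-y) = - y * (\<Prod>j\<in>{2..n}. - (- (d j * FC' j) + y * (d j * FC j)))"
        unfolding poly_up by simp
      also have "\<dots> = - y * ((-1) ^ n' * Q)"
        unfolding Q_def by (subst prod_uminus) (simp add: n')
      finally have pu: "poly (x_up n k c) (-y) = - y * ((-1) ^ n' * Q)" .
      have sq: "((-1::real) ^ n') * (-1) ^ n' = 1"
        by (simp add: power_mult_distrib[symmetric])
      have "poly (\<Sum>m=0..n. monom (real_of_int (O_s n k c m)) m) y
          = (\<Sum>m=0..n. (-1) ^ n * (real_of_int (O_u n k c m) * (-y) ^ m))"
        unfolding poly_sum poly_monom
      proof (rule sum.cong[OF refl])
        fix m
        have e1: "O_s n k c m = (-1) ^ (n + m) * O_u n k c m" by (simp add: O_s_def O_u_def)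
        have e2: "(-y) ^ m = (-1) ^ m * y ^ m" by (rule power_minus)
        show "real_of_int (O_s n k c m) * y ^ m = (-1) ^ n * (real_of_int (O_u n k c m) * (-y) ^ m)"
          unfolding e1 e2 by (simp only: of_int_mult of_int_power of_int_minus of_int_1 power_add mult_ac)
      qed
      also have "\<dots> = (-1) ^ n * poly (x_up n k c) (-y)"
        by (subst eq1) (simp add: poly_sum poly_monom sum_distrib_left)
      also have "\<dots> = y * Q"
        using pu n' sq by (simp add: algebra_simps)
      also have "\<dots> = poly (x_down n k c) y"
        unfolding poly_down Q_def ..
      finally show ?thesis by simp
    qed
    then show ?thesis using poly_eq_poly_eq_iff by blast
  qed
  obtain i0 where i0: "i0 \<le> k" "c i0 \<noteq> 0" using assms(4) by blast
  have dpos: "d j > 0" if "j \<in> {2..n}" for j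
    using that by (simp add: d_def)
  have Fpos: "FC j > 0" if j: "j \<in> {2..n}" for j
  proof -
    have jp: "real j - 1 > 0" using j by simp
    have "c i0 = 1" using i0 c01 by auto
    show ?thesis unfolding FC_def F_def
    proof (rule sum_pos2[of _ i0])
      show "finite {0..k}" by simp
      show "i0 \<in> {0..k}" using i0 by simp
      show "0 < real (k choose i0) * real (c i0) / (real j - 1) ^ i0"
        using \<open>c i0 = 1\<close> i0 jp by simp
      show "\<And>i. i \<in> {0..k} \<Longrightarrow> 0 \<le> real (k choose i) * real (c i) / (real j - 1) ^ i"
        using jp by simp
    qed
  qed
  have z1: "{x. poly (x_up n k c) x = 0} = insert 0 ((\<lambda>j. - FC' j / FC j) ` {2..n})"
  proof -
    have "poly (x_up n k c) x = 0 \<longleftrightarrow> x = 0 \<or> (\<exists>j\<in>{2..n}. x = - FC' j / FC j)" for x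
      proof -
      have "(\<exists>j\<in>{2..n}. d j * FC' j + x * (d j * FC j) = 0) \<longleftrightarrow> (\<exists>j\<in>{2..n}. x = - FC' j / FC j)"
      proof (rule bex_cong[OF refl])
        fix j assume j: "j \<in> {2..n}"
        show "(d j * FC' j + x * (d j * FC j) = 0) \<longleftrightarrow> x = - FC' j / FC j"
          using root_iff[of "d j" "FC j" "FC' j" x] dpos[OF j] Fpos[OF j] by simp
      qed
      then show ?thesis unfolding poly_up by (simp add: prod_zero_iff)
    qed
    then show ?thesis by auto
  qed
  have z2: "{x. poly (x_down n k c) x = 0} = insert 0 ((\<lambda>j. FC' j / FC j) ` {2..n})"
  proof -
    have "poly (x_down n k c) x = 0 \<longleftrightarrow> x = 0 \<or> (\<exists>j\<in>{2..n}. x = FC' j / FC j)" for x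
      proof -
      have "(\<exists>j\<in>{2..n}. - (d j * FC' j) + x * (d j * FC j) = 0) \<longleftrightarrow> (\<exists>j\<in>{2..n}. x = FC' j / FC j)"
      proof (rule bex_cong[OF refl])
        fix j assume j: "j \<in> {2..n}"
        show "(- (d j * FC' j) + x * (d j * FC j) = 0) \<longleftrightarrow> x = FC' j / FC j"
          using root_iff2[of "d j" "FC j" "FC' j" x] dpos[OF j] Fpos[OF j] by simp
      qed
      then show ?thesis unfolding poly_down by (simp add: prod_zero_iff)
    qed
    then show ?thesis by auto
  qed
  show ?thesis using eq1 eq2 z1 z2 unfolding FC_def FC'_def by simp
qed

end
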